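(* For every integer $n\ge0$, $$\mathcal{B}_{n,1}=\sum_{k=0}^{n}\binom{n}{k}\frac{\phi_{k+1}B_{n-k}}{k+1}.$$
   Context: $\phi_m$ denotes the $m$-th Bell number (number of set partitions of an $m$-set). $B_m$ denotes the $m$-th Bernoulli number, defined by $\sum_{m\ge0}B_m\frac{z^m}{m!}=\frac{z}{e^z-1}$. The $1$-Bell numbers $\mathcal{B}_{n,1}$ are defined by $\sum_{n\ge0}\mathcal{B}_{n,1}\frac{z^n}{n!}=\sum_{n\ge0}\frac{(e^z-1)^n}{(n+1)!}=\frac{\exp(e^z-1)-1}{e^z-1}$. *)

theory Defs
  imports "HOL-Library.Disjoint_Sets" "HOL-Computational_Algebra.Formal_Power_Series"
begin

definition bell :: "nat \<Rightarrow> nat" where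
  "bell m = card {P. partition_on {..<m} P}"

definition bernoulli :: "nat \<Rightarrow> real" where
  "bernoulli m = fact m * fps_nth (fps_X / (fps_exp 1 - 1)) m"

definition one_bell :: "nat \<Rightarrow> real" where
  "one_bell n = fact n * fps_nth (Abs_fps (\<lambda>m. 1 / fact (m + 1)) oo (fps_exp 1 - 1)) n"

end

theory Submission imports Defs begin

unbundle fps_syntax

definition pc :: "'a set \<Rightarrow> nat" where "pc A = card {P. partition_on A P}"

lemma pc_le:
  assumes "bij_betw f A B" "finite B" shows "pc A \<le> pc B"
proof -
  have inj: "inj_on f A" using assms bij_betw_def by blast
  have fB: "f ` A = B" using assms(1) by (simp add: bij_betw_def)
  have "inj_on (image (image f)) {P. partition_on A P}"
    by (rule inj_on_subset[OF inj_on_image_Pow[OF inj_on_image_Pow[OF inj]]]) (auto simp: partition_on_def)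
  moreover have "image (image f) ` {P. partition_on A P} \<subseteq> {P. partition_on B P}"
  proof
    fix Q assume "Q \<in> image (image f) ` {P. partition_on A P}"
    then obtain P where P: "partition_on A P" "Q = image f ` P" by auto
    have "partition_on (f ` A) (image f ` P - {{}})" by (rule partition_on_inj_image[OF P(1) inj])
    moreover have "image f ` P - {{}} = image f ` P" using partition_onD3[OF P(1)] by auto
    ultimately show "Q \<in> {P. partition_on B P}" using P fB by simp
  qed
  ultimately show ?thesis unfolding pc_def using card_inj_on_le finitely_many_partition_on[OF assms(2)] by blast
qed

lemma pc_card:
  fixes A :: "nat set" assumes "finite A" shows "card {P. partition_on A P} = bell (card A)"
proof -
  obtain h where h: "bij_betw h A {..<card A}" using finite_same_card_bij[OF assms, of "{..<card A}"] by auto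
  have "pc A \<le> pc {..<card A}" using pc_le[OF h] by simp
  moreover have "pc {..<card A} \<le> pc A" using pc_le[OF bij_betw_inv_into[OF h] assms] .
  ultimately show ?thesis by (simp add: pc_def bell_def)
qed

lemma bell_Suc: "bell (Suc n) = (\<Sum>S\<in>Pow {..<n}. bell (n - card S))"
proof -
  let ?Sig = "Sigma (Pow {..<n}) (\<lambda>S. {Q. partition_on ({..<n} - S) Q})"
  let ?g = "\<lambda>(S,Q). insert (insert n S) Q"
  have inj: "inj_on ?g ?Sig"
  proof (rule inj_onI, clarify)
    fix S1 Q1 S2 Q2 assume a: "S1 \<subseteq> {..<n}" "partition_on ({..<n} - S1) Q1" "S2 \<subseteq> {..<n}"
      "partition_on ({..<n} - S2) Q2" "insert (insert n S1) Q1 = insert (insert n S2) Q2"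
    have n1: "n \<notin> \<Union>Q1" using partition_onD1[OF a(2)] by auto
    have n2: "n \<notin> \<Union>Q2" using partition_onD1[OF a(4)] by auto
    have "insert n S1 \<in> insert (insert n S2) Q2" using a(5) by blast
    hence e: "insert n S1 = insert n S2" using n2 by blast
    hence "S1 = S2" using a(1,3) by (metis insert_ident lessThan_iff less_irrefl subsetD)
    moreover have "insert n S1 \<notin> Q1" using n1 by blast
    moreover have "insert n S2 \<notin> Q2" using n2 by blast
    ultimately show "S1 = S2 \<and> Q1 = Q2" using a(5) e by (metis insert_ident)
  qed
  have img: "?g ` ?Sig = {P. partition_on {..<Suc n} P}"
  proof (intro equalityI subsetI)
    fix P assume "P \<in> ?g ` ?Sig"
    then obtain S Q where a: "S \<subseteq> {..<n}" "partition_on ({..<n} - S) Q" "P = insert (insert n S) Q" by auto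
    have d: "disjnt (insert n S) (\<Union>Q)" using partition_onD1[OF a(2)] by (auto simp: disjnt_def)
    have e: "{..<Suc n} - insert n S = {..<n} - S" by auto
    have "partition_on {..<Suc n} (insert (insert n S) Q)"
      by (subst partition_on_insert[OF d]) (use e a in auto)
    thus "P \<in> {P. partition_on {..<Suc n} P}" using a(3) by simp
  next
    fix P assume "P \<in> {P. partition_on {..<Suc n} P}"
    hence P: "partition_on {..<Suc n} P" by simp
    have "n \<in> \<Union>P" unfolding partition_onD1[OF P, symmetric] by simp
    then obtain b where b: "b \<in> P" "n \<in> b" by blast
    let ?Q = "P - {b}"
    have d: "disjnt b (\<Union>?Q)"
    proof -
      have "disjnt b c" if "c \<in> ?Q" for c
        using partition_onD2[OF P] b(1) that unfolding pairwise_def by blast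
      thus ?thesis by (auto simp: disjnt_def)
    qed
    have "partition_on {..<Suc n} (insert b ?Q)" using P b(1) by (simp add: insert_absorb)
    hence pq: "partition_on ({..<Suc n} - b) ?Q" "b \<subseteq> {..<Suc n}"
      unfolding partition_on_insert[OF d] by auto
    have e1: "{..<Suc n} - b = {..<n} - (b - {n})" using b by (auto elim: less_SucE)
    have bb: "insert n (b - {n}) = b" using b by auto
    have sub: "b - {n} \<subseteq> {..<n}" using pq(2) by (auto elim: less_SucE)
    have mem: "(b - {n}, ?Q) \<in> ?Sig"
      by (rule SigmaI) (use sub pq(1) e1 in auto)
    have "P = ?g (b - {n}, ?Q)" using bb b(1) by (simp add: insert_absorb)
    then show "P \<in> ?g ` ?Sig" using mem by (rule image_eqI[where f = "?g" and x = "(b - {n}, ?Q)"])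
  qed
  have "bell (Suc n) = card ?Sig" using bij_betw_same_card[of ?g ?Sig] inj img by (simp add: bell_def bij_betw_def)
  also have "\<dots> = (\<Sum>S\<in>Pow {..<n}. card {Q. partition_on ({..<n} - S) Q})"
    by (rule card_SigmaI) (auto intro: finitely_many_partition_on)
  also have "\<dots> = (\<Sum>S\<in>Pow {..<n}. bell (n - card S))"
    by (rule sum.cong) (auto simp: pc_card card_Diff_subset finite_subset)
  finally show ?thesis .
qed


lemma sum_Pow_card:
  fixes g :: "nat \<Rightarrow> nat" assumes fA: "finite A"
  shows "(\<Sum>S\<in>Pow A. g (card S)) = (\<Sum>k\<le>card A. (card A choose k) * g k)"
proof -
  have fP: "finite (Pow A)" using fA by simp
  have im: "card ` Pow A = {..card A}"
  proof (intro equalityI subsetI)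
    fix k assume "k \<in> card ` Pow A"
    then obtain S where "S \<subseteq> A" "k = card S" by auto
    thus "k \<in> {..card A}" using card_mono[OF fA] by auto
  next
    fix k assume "k \<in> {..card A}"
    then obtain T where "T \<subseteq> A" "card T = k" using obtain_subset_with_card_n[of k A] by auto
    thus "k \<in> card ` Pow A" by auto
  qed
  have "(\<Sum>S\<in>Pow A. g (card S)) = (\<Sum>k\<in>card ` Pow A. \<Sum>S\<in>{S. S \<in> Pow A \<and> card S = k}. g (card S))"
    by (rule sum.image_gen[OF fP])
  also have "\<dots> = (\<Sum>k\<le>card A. \<Sum>S\<in>{S. S \<in> Pow A \<and> card S = k}. g k)"
    unfolding im by (intro sum.cong) auto
  also have "\<dots> = (\<Sum>k\<le>card A. (card A choose k) * g k)"
  proof (intro sum.cong refl)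
    fix k
    have "{S. S \<in> Pow A \<and> card S = k} = {B. B \<subseteq> A \<and> card B = k}" by auto
    thus "(\<Sum>S\<in>{S. S \<in> Pow A \<and> card S = k}. g k) = (card A choose k) * g k"
      using n_subsets[OF fA, of k] by simp
  qed
  finally show ?thesis .
qed

lemma bell_Suc': "bell (Suc n) = (\<Sum>k\<le>n. (n choose k) * bell (n - k))"
  using bell_Suc[of n] sum_Pow_card[of "{..<n}" "\<lambda>k. bell (n - k)"] by simp

lemma bell_0: "bell 0 = 1"
  by (simp add: bell_def partition_on_empty)

lemma ode_unique:
  fixes f g H :: "real fps"
  assumes "fps_deriv f = f * H" "fps_deriv g = g * H" "f $ 0 = g $ 0"
  shows "f = g"
proof -
  have "f $ n = g $ n" for n
  proof (induction n rule: less_induct)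
    case (less n)
    show ?case
    proof (cases n)
      case 0 thus ?thesis using assms(3) by simp
    next
      case (Suc m)
      have "of_nat (m + 1) * f $ (m + 1) = (f * H) $ m" using arg_cong[OF assms(1), of "\<lambda>F. F $ m"] by simp
      also have "\<dots> = (\<Sum>i=0..m. f $ i * H $ (m - i))" by (simp add: fps_mult_nth)
      also have "\<dots> = (\<Sum>i=0..m. g $ i * H $ (m - i))" using less Suc by (intro sum.cong) auto
      also have "\<dots> = (g * H) $ m" by (simp add: fps_mult_nth)
      also have "\<dots> = of_nat (m + 1) * g $ (m + 1)" using arg_cong[OF assms(2), of "\<lambda>F. F $ m"] by simp
      finally show ?thesis using Suc by simp
    qed
  qed
  thus ?thesis by (simp add: fps_eq_iff)
qed

definition Bl :: "real fps" where "Bl = Abs_fps (\<lambda>m. real (bell m) / fact m)"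

lemma Bl_deriv: "fps_deriv Bl = Bl * fps_exp 1"
proof (rule fps_ext)
  fix n
  have "fps_deriv Bl $ n = real (bell (Suc n)) / fact n"
    by (simp add: Bl_def field_simps del: of_nat_Suc)
  also have "\<dots> = (\<Sum>k\<le>n. real (n choose k) * real (bell (n - k))) / fact n"
    by (simp add: bell_Suc')
  also have "\<dots> = (\<Sum>k=0..n. 1 / fact k * (real (bell (n - k)) / fact (n - k)))"
    by (simp add: sum_divide_distrib atMost_atLeast0 binomial_fact field_simps)
  also have "\<dots> = (fps_exp 1 * Bl) $ n" by (simp add: fps_mult_nth Bl_def)
  finally show "fps_deriv Bl $ n = (Bl * fps_exp 1) $ n" by (simp add: mult.commute)
qed

lemma Bl_compose: "Bl = fps_exp 1 oo (fps_exp 1 - 1)"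
proof (rule ode_unique[OF Bl_deriv])
  have E0: "(fps_exp 1 - 1 :: real fps) $ 0 = 0" by simp
  show "fps_deriv (fps_exp 1 oo (fps_exp 1 - 1)) = (fps_exp 1 oo (fps_exp 1 - 1)) * fps_exp (1::real)"
    by (simp add: fps_compose_deriv[OF E0])
  show "Bl $ 0 = (fps_exp 1 oo (fps_exp 1 - 1)) $ 0" by (simp add: Bl_def bell_0)
qed


theorem mainTheorem17:
  fixes n :: nat
  shows "one_bell n =
    (\<Sum>k=0..n. real (n choose k) * real (bell (k + 1)) * bernoulli (n - k) / real (k + 1))"
proof -
  define E :: "real fps" where "E = fps_exp 1 - 1"
  define A :: "real fps" where "A = Abs_fps (\<lambda>m. 1 / fact (m + 1))"
  define G :: "real fps" where "G = Abs_fps (\<lambda>k. real (bell (k + 1)) / fact (k + 1))"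
  define Bn :: "real fps" where "Bn = fps_X / E"
  have E0: "E $ 0 = 0" by (simp add: E_def)
  have E1: "E $ 1 = 1" by (simp add: E_def)
  have Enz: "E \<noteq> 0" using E1 by auto
  have AX: "A * fps_X = E" by (rule fps_ext) (simp add: A_def E_def fact_reduce)
  have GX: "G * fps_X = Bl - 1" by (rule fps_ext) (simp add: G_def Bl_def bell_0 fact_reduce)
  have BnE: "Bn * E = fps_X" unfolding Bn_def
    by (rule fps_times_divide_eq[OF Enz]) (use subdegree_leI[of E 1] E1 in simp)
  have "(A oo E) * E = (A oo E) * (fps_X oo E)" using E0 by simp
  also have "\<dots> = (A * fps_X) oo E" by (rule fps_compose_mult_distrib[OF E0, symmetric])
  also have "\<dots> = (fps_exp 1 oo E) - 1" by (simp add: AX E_def fps_compose_sub_distrib)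
  also have "\<dots> = Bl - 1" by (simp add: Bl_compose E_def)
  also have "\<dots> = (G * Bn) * E" by (simp add: GX[symmetric] BnE mult.assoc)
  finally have "(A oo E) * E = (G * Bn) * E" .
  hence O: "A oo E = G * Bn" using Enz by simp
  have "one_bell n = fact n * (G * Bn) $ n" by (simp add: one_bell_def O[symmetric] A_def E_def)
  also have "\<dots> = (\<Sum>k=0..n. fact n * (G $ k * Bn $ (n - k)))"
    by (simp add: fps_mult_nth sum_distrib_left)
  also have "\<dots> = (\<Sum>k=0..n. real (n choose k) * real (bell (k + 1)) * bernoulli (n - k) / real (k + 1))"
  proof (rule sum.cong[OF refl])
    fix k assume k: "k \<in> {0..n}"
    have bn: "Bn $ (n - k) = bernoulli (n - k) / fact (n - k)"
      by (simp add: bernoulli_def Bn_def E_def)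
    have "real (n choose k) = fact n / (fact k * fact (n - k))" using k by (simp add: binomial_fact)
    hence fn: "fact n = real (n choose k) * fact k * fact (n - k)" by (simp add: field_simps)
    show "fact n * (G $ k * Bn $ (n - k)) = real (n choose k) * real (bell (k + 1)) * bernoulli (n - k) / real (k + 1)"
      unfolding fn by (simp add: bn G_def field_simps del: of_nat_Suc)
  qed
  finally show ?thesis .
qed

end
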